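(* If $\xi=(\xi_1,\xi_2)$ is a simple max-stable bivariate random vector with dependency set $K$, then $$\mathbb{E}(\xi_1^{-1}\xi_2^{-1})=2V_2(K^o)\quad\text{and}\quad\mathrm{Cov}(\xi_1^{-1},\xi_2^{-1})=2V_2(K^o)-1,$$ where $K^o=\{x\in[0,\infty)^2:h(K,x)\le1\}$ and $V_2$ is area.
   Context: A simple max-stable random vector is max-stable with unit Fréchet marginals ($\mathbb{P}\{\xi_i\le t\}=e^{-1/t}$, $t>0$). Its dependency set is the compact convex $K\subset[0,1]^2$ with $\mathbb{P}\{\xi\le x\}=\exp\{-h(K,(1/x_1,1/x_2))\}$ for $x\in(0,\infty)^2$. The support function is $h(K,x)=\sup_{y\in K}\langle y,x\rangle$. *)

theory Defs
  imports "HOL-Probability.Probability"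
begin

definition supp_fun :: "(real \<times> real) set \<Rightarrow> real \<times> real \<Rightarrow> real" where
  "supp_fun K x = (SUP y\<in>K. y \<bullet> x)"

definition polar_pos :: "(real \<times> real) set \<Rightarrow> (real \<times> real) set" where
  "polar_pos K = {x. 0 \<le> fst x \<and> 0 \<le> snd x \<and> supp_fun K x \<le> 1}"

definition covariance :: "'a measure \<Rightarrow> ('a \<Rightarrow> real) \<Rightarrow> ('a \<Rightarrow> real) \<Rightarrow> real" where
  "covariance M X Y =
     integral\<^sup>L M (\<lambda>\<omega>. (X \<omega> - integral\<^sup>L M X) * (Y \<omega> - integral\<^sup>L M Y))"

definition simple_max_stable_dep :: "'a measure \<Rightarrow> ('a \<Rightarrow> real \<times> real) \<Rightarrow> (real \<times> real) set \<Rightarrow> bool" where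
  "simple_max_stable_dep M \<xi> K \<longleftrightarrow>
     prob_space M \<and> \<xi> \<in> borel_measurable M \<and>
     (\<forall>t>0. measure M {\<omega>\<in>space M. fst (\<xi> \<omega>) \<le> t} = exp (- 1 / t)) \<and>
     (\<forall>t>0. measure M {\<omega>\<in>space M. snd (\<xi> \<omega>) \<le> t} = exp (- 1 / t)) \<and>
     compact K \<and> convex K \<and> K \<subseteq> {0..1} \<times> {0..1} \<and>
     (\<forall>x1>0. \<forall>x2>0. measure M {\<omega>\<in>space M. fst (\<xi> \<omega>) \<le> x1 \<and> snd (\<xi> \<omega>) \<le> x2}
         = exp (- supp_fun K (1 / x1, 1 / x2)))"

end

theory Submission
  imports Defs
begin


lemma supp_upper:
  assumes "compact K" "y \<in> K"
  shows "y \<bullet> x \<le> supp_fun K x"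
proof -
  have "bounded ((\<lambda>y. y \<bullet> x) ` K)"
    by (intro compact_imp_bounded compact_continuous_image assms continuous_intros)
  then have "bdd_above ((\<lambda>y. y \<bullet> x) ` K)" by (rule bounded_imp_bdd_above)
  then show ?thesis unfolding supp_fun_def using assms by (intro cSUP_upper)
qed

lemma supp_least:
  assumes "K \<noteq> {}" "\<And>y. y \<in> K \<Longrightarrow> y \<bullet> x \<le> c"
  shows "supp_fun K x \<le> c"
  unfolding supp_fun_def using assms by (intro cSUP_least)

lemma supp_homog:
  assumes "compact K" "K \<noteq> {}" "t > 0"
  shows "supp_fun K (t *\<^sub>R x) = t * supp_fun K x"
proof (rule antisym)
  show "supp_fun K (t *\<^sub>R x) \<le> t * supp_fun K x"
    using assms supp_upper[OF assms(1)] by (intro supp_least) (auto intro: mult_left_mono)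
  have "supp_fun K x \<le> supp_fun K (t *\<^sub>R x) / t"
  proof (rule supp_least[OF assms(2)])
    fix y assume "y \<in> K"
    then have "y \<bullet> (t *\<^sub>R x) \<le> supp_fun K (t *\<^sub>R x)" using supp_upper[OF assms(1)] by blast
    then show "y \<bullet> x \<le> supp_fun K (t *\<^sub>R x) / t" using assms(3) by (simp add: field_simps)
  qed
  then show "t * supp_fun K x \<le> supp_fun K (t *\<^sub>R x)" using assms(3) by (simp add: field_simps)
qed

lemma supp_lip:
  assumes "compact K" "K \<noteq> {}" "K \<subseteq> {0..1} \<times> {0..1}"
  shows "supp_fun K x \<le> supp_fun K x' + 2 * norm (x - x')"
proof (rule supp_least[OF assms(2)])
  fix y assume y: "y \<in> K"
  have ny: "norm y \<le> 2"
  proof -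
    have "norm y \<le> norm (fst y) + norm (snd y)" using norm_Pair_le[of "fst y" "snd y"] by simp
    also have "\<dots> \<le> 2" using y assms(3) by (auto simp: mem_Times_iff)
    finally show ?thesis .
  qed
  have "y \<bullet> x = y \<bullet> x' + y \<bullet> (x - x')" by (simp add: inner_diff_right)
  also have "y \<bullet> (x - x') \<le> norm y * norm (x - x')" by (rule norm_cauchy_schwarz)
  also have "\<dots> \<le> 2 * norm (x - x')" using ny by (intro mult_right_mono) auto
  finally show "y \<bullet> x \<le> supp_fun K x' + 2 * norm (x - x')"
    using supp_upper[OF assms(1) y, of x'] by linarith
qed

lemma supp_cont:
  assumes "compact K" "K \<noteq> {}" "K \<subseteq> {0..1} \<times> {0..1}"
  shows "continuous_on UNIV (supp_fun K)"
proof -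
  have "lipschitz_on 2 UNIV (supp_fun K)"
  proof (rule lipschitz_onI)
    fix x x' :: "real \<times> real"
    have "supp_fun K x \<le> supp_fun K x' + 2 * norm (x - x')"
         "supp_fun K x' \<le> supp_fun K x + 2 * norm (x' - x)"
      using supp_lip[OF assms] by blast+
    then show "dist (supp_fun K x) (supp_fun K x') \<le> 2 * dist x x'"
      by (simp add: dist_norm norm_minus_commute abs_le_iff)
  qed simp
  then show ?thesis by (rule lipschitz_on_continuous_on)
qed

lemma supp_meas[measurable]:
  assumes "compact K" "K \<noteq> {}" "K \<subseteq> {0..1} \<times> {0..1}"
  shows "supp_fun K \<in> borel_measurable borel"
  by (rule borel_measurable_continuous_onI[OF supp_cont[OF assms]])

lemma supp_lower1:
  assumes "compact K" "a \<in> K" "K \<subseteq> {0..1} \<times> {0..1}" "0 \<le> snd u"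
  shows "fst a * fst u \<le> supp_fun K u"
proof -
  have "0 \<le> snd a" using assms by (auto simp: mem_Times_iff)
  then have "fst a * fst u \<le> a \<bullet> u" using assms(4) by (simp add: inner_prod_def)
  then show ?thesis using supp_upper[OF assms(1,2)] by (meson order_trans)
qed

lemma supp_lower2:
  assumes "compact K" "a \<in> K" "K \<subseteq> {0..1} \<times> {0..1}" "0 \<le> fst u"
  shows "snd a * snd u \<le> supp_fun K u"
proof -
  have "0 \<le> fst a" using assms by (auto simp: mem_Times_iff)
  then have "snd a * snd u \<le> a \<bullet> u" using assms(4) by (simp add: inner_prod_def)
  then show ?thesis using supp_upper[OF assms(1,2)] by (meson order_trans)
qed

lemma exp_le_t: "t > 0 \<Longrightarrow> exp (- 1 / t) \<le> (t::real)"
proof -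
  assume t: "t > 0"
  have "1 / t \<le> exp (1 / t)" using exp_ge_add_one_self[of "1/t"] by linarith
  then have "exp (- 1 / t) * (1/t) \<le> exp (- 1/t) * exp (1/t)" by (intro mult_left_mono) auto
  also have "\<dots> = 1" by (simp add: exp_minus_inverse[symmetric] exp_add[symmetric])
  finally show ?thesis using t by (simp add: field_simps)
qed




locale sms =
  fixes M :: "'a measure" and \<xi> :: "'a \<Rightarrow> real \<times> real" and K :: "(real \<times> real) set"
  assumes sms: "simple_max_stable_dep M \<xi> K"
begin

sublocale prob_space M using sms by (simp add: simple_max_stable_dep_def)

lemma xi_meas: "\<xi> \<in> borel_measurable M"
  using sms by (simp add: simple_max_stable_dep_def)

lemma K_props: "compact K" "K \<subseteq> {0..1} \<times> {0..1}"
  using sms by (simp_all add: simple_max_stable_dep_def)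

lemma marg1: "t > 0 \<Longrightarrow> measure M {\<omega>\<in>space M. fst (\<xi> \<omega>) \<le> t} = exp (- 1 / t)"
  using sms by (simp add: simple_max_stable_dep_def)
lemma marg2: "t > 0 \<Longrightarrow> measure M {\<omega>\<in>space M. snd (\<xi> \<omega>) \<le> t} = exp (- 1 / t)"
  using sms by (simp add: simple_max_stable_dep_def)
lemma joint: "x1 > 0 \<Longrightarrow> x2 > 0 \<Longrightarrow>
   measure M {\<omega>\<in>space M. fst (\<xi> \<omega>) \<le> x1 \<and> snd (\<xi> \<omega>) \<le> x2} = exp (- supp_fun K (1 / x1, 1 / x2))"
  using sms by (simp add: simple_max_stable_dep_def)

lemma fst_meas[measurable]: "(\<lambda>\<omega>. fst (\<xi> \<omega>)) \<in> borel_measurable M"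
  by (rule measurable_compose[OF xi_meas borel_measurable_continuous_onI]) (intro continuous_intros)
lemma snd_meas[measurable]: "(\<lambda>\<omega>. snd (\<xi> \<omega>)) \<in> borel_measurable M"
  by (rule measurable_compose[OF xi_meas borel_measurable_continuous_onI]) (intro continuous_intros)
lemma eta1_meas[measurable]: "(\<lambda>\<omega>. inverse (fst (\<xi> \<omega>))) \<in> borel_measurable M" by measurable
lemma eta2_meas[measurable]: "(\<lambda>\<omega>. inverse (snd (\<xi> \<omega>))) \<in> borel_measurable M" by measurable
lemma set1[simp]: "{\<omega>\<in>space M. fst (\<xi> \<omega>) \<le> t} \<in> sets M" by measurable
lemma set2[simp]: "{\<omega>\<in>space M. snd (\<xi> \<omega>) \<le> t} \<in> sets M" by measurable
lemma set12[simp]: "{\<omega>\<in>space M. fst (\<xi> \<omega>) \<le> t \<and> snd (\<xi> \<omega>) \<le> t'} \<in> sets M" by measurable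

lemma null1: "measure M {\<omega>\<in>space M. fst (\<xi> \<omega>) \<le> 0} = 0"
proof -
  have "measure M {\<omega>\<in>space M. fst (\<xi> \<omega>) \<le> 0} \<le> t" if t: "t > 0" for t
  proof -
    have "measure M {\<omega>\<in>space M. fst (\<xi> \<omega>) \<le> 0} \<le> measure M {\<omega>\<in>space M. fst (\<xi> \<omega>) \<le> t}"
      using t by (intro finite_measure_mono) auto
    also have "\<dots> \<le> t" using marg1[OF t] exp_le_t[OF t] by simp
    finally show ?thesis .
  qed
  then have "measure M {\<omega>\<in>space M. fst (\<xi> \<omega>) \<le> 0} \<le> 0"
    by (meson dense not_le)
  then show ?thesis by (simp add: measure_le_0_iff)
qed

lemma null2: "measure M {\<omega>\<in>space M. snd (\<xi> \<omega>) \<le> 0} = 0"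
proof -
  have "measure M {\<omega>\<in>space M. snd (\<xi> \<omega>) \<le> 0} \<le> t" if t: "t > 0" for t
  proof -
    have "measure M {\<omega>\<in>space M. snd (\<xi> \<omega>) \<le> 0} \<le> measure M {\<omega>\<in>space M. snd (\<xi> \<omega>) \<le> t}"
      using t by (intro finite_measure_mono) auto
    also have "\<dots> \<le> t" using marg2[OF t] exp_le_t[OF t] by simp
    finally show ?thesis .
  qed
  then have "measure M {\<omega>\<in>space M. snd (\<xi> \<omega>) \<le> 0} \<le> 0"
    by (meson dense not_le)
  then show ?thesis by (simp add: measure_le_0_iff)
qed

lemma AE_pos: "AE \<omega> in M. 0 < fst (\<xi> \<omega>) \<and> 0 < snd (\<xi> \<omega>)"
proof -
  have "{\<omega>\<in>space M. fst (\<xi> \<omega>) \<le> 0} \<in> null_sets M"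
    using null1 by (simp add: null_sets_def emeasure_eq_measure)
  from AE_not_in[OF this] AE_space have 1: "AE \<omega> in M. 0 < fst (\<xi> \<omega>)"
    by eventually_elim auto
  have "{\<omega>\<in>space M. snd (\<xi> \<omega>) \<le> 0} \<in> null_sets M"
    using null2 by (simp add: null_sets_def emeasure_eq_measure)
  from AE_not_in[OF this] AE_space have 2: "AE \<omega> in M. 0 < snd (\<xi> \<omega>)"
    by eventually_elim auto
  from 1 2 show ?thesis by eventually_elim auto
qed

lemma exists_a: "\<exists>a\<in>K. fst a > 0"
proof (rule ccontr)
  assume "\<not> ?thesis"
  then have nk: "\<forall>y\<in>K. fst y \<le> 0" by auto
  define C where "C = supp_fun K (0, 1)"
  have hC: "supp_fun K (v, 1) \<le> C" if v: "v > 0" for v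
  proof (cases "K = {}")
    case True then show ?thesis by (simp add: C_def supp_fun_def)
  next
    case False
    show ?thesis unfolding C_def
    proof (rule supp_least[OF False])
      fix y assume y: "y \<in> K"
      have "y \<bullet> (v, 1) \<le> y \<bullet> (0, 1)" using nk y v by (simp add: inner_prod_def mult_nonpos_nonneg)
      then show "y \<bullet> (v, 1) \<le> supp_fun K (0, 1)" using supp_upper[OF K_props(1) y] by (meson order_trans)
    qed
  qed
  define v where "v = \<bar>C\<bar> + 1"
  have v: "v > 0" by (simp add: v_def)
  have "exp (- C) \<le> exp (- supp_fun K (v, 1))" using hC[OF v] by simp
  also have "\<dots> = measure M {\<omega>\<in>space M. fst (\<xi> \<omega>) \<le> 1/v \<and> snd (\<xi> \<omega>) \<le> 1}"
    using joint[of "1/v" 1] v by simp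
  also have "\<dots> \<le> measure M {\<omega>\<in>space M. fst (\<xi> \<omega>) \<le> 1/v}"
    by (intro finite_measure_mono) auto
  also have "\<dots> = exp (- v)" using marg1[of "1/v"] v by simp
  finally have "- C \<le> - v" by simp
  then show False unfolding v_def by linarith
qed

lemma exists_b: "\<exists>b\<in>K. snd b > 0"
proof (rule ccontr)
  assume "\<not> ?thesis"
  then have nk: "\<forall>y\<in>K. snd y \<le> 0" by auto
  define C where "C = supp_fun K (1, 0)"
  have hC: "supp_fun K (1, v) \<le> C" if v: "v > 0" for v
  proof (cases "K = {}")
    case True then show ?thesis by (simp add: C_def supp_fun_def)
  next
    case False
    show ?thesis unfolding C_def
    proof (rule supp_least[OF False])
      fix y assume y: "y \<in> K"
      have "y \<bullet> (1, v) \<le> y \<bullet> (1, 0)" using nk y v by (simp add: inner_prod_def mult_nonpos_nonneg)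
      then show "y \<bullet> (1, v) \<le> supp_fun K (1, 0)" using supp_upper[OF K_props(1) y] by (meson order_trans)
    qed
  qed
  define v where "v = \<bar>C\<bar> + 1"
  have v: "v > 0" by (simp add: v_def)
  have "exp (- C) \<le> exp (- supp_fun K (1, v))" using hC[OF v] by simp
  also have "\<dots> = measure M {\<omega>\<in>space M. fst (\<xi> \<omega>) \<le> 1 \<and> snd (\<xi> \<omega>) \<le> 1/v}"
    using joint[of 1 "1/v"] v by simp
  also have "\<dots> \<le> measure M {\<omega>\<in>space M. snd (\<xi> \<omega>) \<le> 1/v}"
    by (intro finite_measure_mono) auto
  also have "\<dots> = exp (- v)" using marg2[of "1/v"] v by simp
  finally have "- C \<le> - v" by simp
  then show False unfolding v_def by linarith
qed

lemma K_ne: "K \<noteq> {}" using exists_a by auto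

lemma h_meas[measurable]: "supp_fun K \<in> borel_measurable borel"
  using supp_meas K_props K_ne by blast

end



lemma E1: "(\<integral>\<^sup>+t. ennreal (exp (- t)) * indicator {a..} t \<partial>lborel) = ennreal (exp (- a))"
proof -
  have "(\<integral>\<^sup>+t. ennreal (exp (- t)) * indicator {a..} t \<partial>lborel)
      = (\<integral>\<^sup>+x. ennreal (exp (- (a + x))) * indicator {a..} (a + x) \<partial>lborel)"
    by (subst nn_integral_real_affine[where c=1 and t=a]) auto
  also have "\<dots> = (\<integral>\<^sup>+x. ennreal (exp (- a)) * (ennreal (x ^ 0 * exp (- x)) * indicator {0..} x) \<partial>lborel)"
    by (intro nn_integral_cong) (auto simp: indicator_def exp_diff ennreal_mult' [symmetric] exp_minus field_simps)
  also have "\<dots> = ennreal (exp (- a)) * (\<integral>\<^sup>+x. ennreal (x ^ 0 * exp (- x)) * indicator {0..} x \<partial>lborel)"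
    by (rule nn_integral_cmult) auto
  also have "\<dots> = ennreal (exp (- a))" by (simp only: nn_intergal_power_times_exp_Ici) simp
  finally show ?thesis .
qed

context sms begin

definition "Q = {u::real\<times>real. 0 < fst u \<and> 0 < snd u}"

lemma tail2: "(\<integral>\<^sup>+\<omega>. ennreal (inverse (fst (\<xi> \<omega>)) * inverse (snd (\<xi> \<omega>))) \<partial>M)
   = (\<integral>\<^sup>+u. ennreal (exp (- supp_fun K u)) * indicator Q u \<partial>lborel)"
proof -
  interpret p: pair_sigma_finite M "lborel :: (real \<times> real) measure" ..
  define G where "G = (\<lambda>\<omega> (u::real\<times>real). (if 0 < fst u \<and> fst u \<le> inverse (fst (\<xi> \<omega>)) \<and>
     0 < snd u \<and> snd u \<le> inverse (snd (\<xi> \<omega>)) then 1 else 0 :: ennreal))"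
  have [measurable]: "(\<lambda>x. fst (snd x)) \<in> borel_measurable (M \<Otimes>\<^sub>M (lborel :: (real \<times> real) measure))"
    by (rule measurable_compose[OF measurable_snd]) (simp add: borel_measurable_continuous_onI continuous_intros)
  have [measurable]: "(\<lambda>x. snd (snd x)) \<in> borel_measurable (M \<Otimes>\<^sub>M (lborel :: (real \<times> real) measure))"
    by (rule measurable_compose[OF measurable_snd]) (simp add: borel_measurable_continuous_onI continuous_intros)
  have Gm: "case_prod G \<in> borel_measurable (M \<Otimes>\<^sub>M lborel)"
    unfolding G_def by measurable
  have 1: "(\<integral>\<^sup>+\<omega>. ennreal (inverse (fst (\<xi> \<omega>)) * inverse (snd (\<xi> \<omega>))) \<partial>M)
       = (\<integral>\<^sup>+\<omega>. (\<integral>\<^sup>+u. G \<omega> u \<partial>lborel) \<partial>M)"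
  proof (rule nn_integral_cong_AE)
    show "AE \<omega> in M. ennreal (inverse (fst (\<xi> \<omega>)) * inverse (snd (\<xi> \<omega>))) = (\<integral>\<^sup>+u. G \<omega> u \<partial>lborel)"
      using AE_pos
    proof eventually_elim
      fix \<omega> assume pos: "0 < fst (\<xi> \<omega>) \<and> 0 < snd (\<xi> \<omega>)"
      define a where "a = inverse (fst (\<xi> \<omega>))"
      define b where "b = inverse (snd (\<xi> \<omega>))"
      have ab: "0 < a" "0 < b" using pos by (auto simp: a_def b_def)
      have "(\<integral>\<^sup>+u. G \<omega> u \<partial>lborel) = (\<integral>\<^sup>+u. indicator ({0<..a} \<times> {0<..b}) u \<partial>lborel)"
        by (intro nn_integral_cong) (auto simp: G_def a_def b_def indicator_def mem_Times_iff)
      also have "\<dots> = (\<integral>\<^sup>+u. indicator ({0<..a} \<times> {0<..b}) u \<partial>(lborel \<Otimes>\<^sub>M lborel))"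
        by (simp add: lborel_prod)
      also have "\<dots> = emeasure (lborel \<Otimes>\<^sub>M lborel) ({0<..a} \<times> {0<..b})"
        by (rule nn_integral_indicator) (intro pair_measureI, auto)
      also have "\<dots> = emeasure lborel {0<..a} * emeasure lborel {0<..b}"
        by (rule lborel.emeasure_pair_measure_Times) auto
      also have "\<dots> = ennreal (a * b)" using ab by (simp add: ennreal_mult)
      finally show "ennreal (inverse (fst (\<xi> \<omega>)) * inverse (snd (\<xi> \<omega>))) = (\<integral>\<^sup>+u. G \<omega> u \<partial>lborel)"
        by (simp add: a_def b_def)
    qed
  qed
  also have "\<dots> = (\<integral>\<^sup>+u. (\<integral>\<^sup>+\<omega>. G \<omega> u \<partial>M) \<partial>lborel)"
    using p.Fubini'[OF Gm] by simp
  also have "\<dots> = (\<integral>\<^sup>+u. ennreal (exp (- supp_fun K u)) * indicator Q u \<partial>lborel)"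
  proof (rule nn_integral_cong)
    fix u :: "real \<times> real"
    show "(\<integral>\<^sup>+\<omega>. G \<omega> u \<partial>M) = ennreal (exp (- supp_fun K u)) * indicator Q u"
    proof (cases "u \<in> Q")
      case False
      then have "G \<omega> u = 0" for \<omega> by (auto simp: G_def Q_def)
      then show ?thesis using False by simp
    next
      case True
      then have u: "0 < fst u" "0 < snd u" by (auto simp: Q_def)
      have "(\<integral>\<^sup>+\<omega>. G \<omega> u \<partial>M) = (\<integral>\<^sup>+\<omega>. indicator {\<omega>\<in>space M. 0 < fst u \<and> fst u \<le> inverse (fst (\<xi> \<omega>)) \<and>
          0 < snd u \<and> snd u \<le> inverse (snd (\<xi> \<omega>))} \<omega> \<partial>M)"
        by (intro nn_integral_cong) (auto simp: G_def indicator_def)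
      also have "\<dots> = emeasure M {\<omega>\<in>space M. 0 < fst u \<and> fst u \<le> inverse (fst (\<xi> \<omega>)) \<and>
          0 < snd u \<and> snd u \<le> inverse (snd (\<xi> \<omega>))}"
        by (rule nn_integral_indicator) measurable
      also have "\<dots> = emeasure M {\<omega>\<in>space M. fst (\<xi> \<omega>) \<le> 1 / fst u \<and> snd (\<xi> \<omega>) \<le> 1 / snd u}"
      proof (rule emeasure_eq_AE)
        show "AE \<omega> in M. (\<omega> \<in> {\<omega>\<in>space M. 0 < fst u \<and> fst u \<le> inverse (fst (\<xi> \<omega>)) \<and>
          0 < snd u \<and> snd u \<le> inverse (snd (\<xi> \<omega>))}) =
          (\<omega> \<in> {\<omega>\<in>space M. fst (\<xi> \<omega>) \<le> 1 / fst u \<and> snd (\<xi> \<omega>) \<le> 1 / snd u})"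
          using AE_pos
        proof eventually_elim
          fix \<omega> assume pos: "0 < fst (\<xi> \<omega>) \<and> 0 < snd (\<xi> \<omega>)"
          have "fst u \<le> inverse (fst (\<xi> \<omega>)) \<longleftrightarrow> fst (\<xi> \<omega>) \<le> 1 / fst u"
            using pos u by (simp add: field_simps)
          moreover have "snd u \<le> inverse (snd (\<xi> \<omega>)) \<longleftrightarrow> snd (\<xi> \<omega>) \<le> 1 / snd u"
            using pos u by (simp add: field_simps)
          ultimately show "(\<omega> \<in> {\<omega>\<in>space M. 0 < fst u \<and> fst u \<le> inverse (fst (\<xi> \<omega>)) \<and>
            0 < snd u \<and> snd u \<le> inverse (snd (\<xi> \<omega>))}) =
            (\<omega> \<in> {\<omega>\<in>space M. fst (\<xi> \<omega>) \<le> 1 / fst u \<and> snd (\<xi> \<omega>) \<le> 1 / snd u})"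
            using u by auto
        qed
      qed measurable
      also have "\<dots> = ennreal (exp (- supp_fun K u))"
        using joint[of "1 / fst u" "1 / snd u"] u by (simp add: emeasure_eq_measure)
      finally show ?thesis using True by simp
    qed
  qed
  finally show ?thesis .
qed

end



lemma fstb[measurable]: "(\<lambda>u::real\<times>real. fst u) \<in> borel_measurable borel"
  by (simp add: borel_measurable_continuous_onI continuous_intros)
lemma sndb[measurable]: "(\<lambda>u::real\<times>real. snd u) \<in> borel_measurable borel"
  by (simp add: borel_measurable_continuous_onI continuous_intros)

lemma tail1:
  assumes "sigma_finite_measure M" and Xm[measurable]: "X \<in> borel_measurable M"
    and pos: "AE \<omega> in M. 0 < X \<omega>"
    and tl: "\<And>u. u > 0 \<Longrightarrow> emeasure M {\<omega>\<in>space M. u \<le> X \<omega>} = ennreal (exp (- u))"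
  shows "(\<integral>\<^sup>+\<omega>. ennreal (X \<omega>) \<partial>M) = 1"
proof -
  interpret sigma_finite_measure M by fact
  interpret p: pair_sigma_finite M "lborel :: real measure" ..
  define G where "G = (\<lambda>\<omega> (u::real). (if 0 < u \<and> u \<le> X \<omega> then 1 else 0 :: ennreal))"
  have Gm: "case_prod G \<in> borel_measurable (M \<Otimes>\<^sub>M lborel)"
    unfolding G_def by measurable
  have "(\<integral>\<^sup>+\<omega>. ennreal (X \<omega>) \<partial>M) = (\<integral>\<^sup>+\<omega>. (\<integral>\<^sup>+u. G \<omega> u \<partial>lborel) \<partial>M)"
  proof (rule nn_integral_cong_AE)
    show "AE \<omega> in M. ennreal (X \<omega>) = (\<integral>\<^sup>+u. G \<omega> u \<partial>lborel)"
      using pos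
    proof eventually_elim
      fix \<omega> assume p: "0 < X \<omega>"
      have "(\<integral>\<^sup>+u. G \<omega> u \<partial>lborel) = (\<integral>\<^sup>+u. indicator {0<..X \<omega>} u \<partial>lborel)"
        by (intro nn_integral_cong) (auto simp: G_def indicator_def)
      also have "\<dots> = ennreal (X \<omega>)" using p by simp
      finally show "ennreal (X \<omega>) = (\<integral>\<^sup>+u. G \<omega> u \<partial>lborel)" ..
    qed
  qed
  also have "\<dots> = (\<integral>\<^sup>+u. (\<integral>\<^sup>+\<omega>. G \<omega> u \<partial>M) \<partial>lborel)"
    using p.Fubini'[OF Gm] by simp
  also have "\<dots> = (\<integral>\<^sup>+u. ennreal (exp (- u)) * indicator {0<..} u \<partial>lborel)"
  proof (rule nn_integral_cong)
    fix u :: real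
    show "(\<integral>\<^sup>+\<omega>. G \<omega> u \<partial>M) = ennreal (exp (- u)) * indicator {0<..} u"
    proof (cases "0 < u")
      case False
      then have "G \<omega> u = 0" for \<omega> by (auto simp: G_def)
      then show ?thesis using False by simp
    next
      case True
      have "(\<integral>\<^sup>+\<omega>. G \<omega> u \<partial>M) = (\<integral>\<^sup>+\<omega>. indicator {\<omega>\<in>space M. u \<le> X \<omega>} \<omega> \<partial>M)"
        using True by (intro nn_integral_cong) (auto simp: G_def indicator_def)
      also have "\<dots> = emeasure M {\<omega>\<in>space M. u \<le> X \<omega>}"
        by (rule nn_integral_indicator) measurable
      finally show ?thesis using True tl[OF True] by simp
    qed
  qed
  also have "\<dots> = (\<integral>\<^sup>+u. ennreal (exp (- u)) * indicator {0..} u \<partial>lborel)"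
    by (intro nn_integral_cong_AE) (use AE_lborel_singleton[of 0] in \<open>eventually_elim, auto simp: indicator_def\<close>)
  also have "\<dots> = 1" using E1[of 0] by simp
  finally show ?thesis .
qed

context sms begin

lemma mean1: "(\<integral>\<^sup>+\<omega>. ennreal (inverse (fst (\<xi> \<omega>))) \<partial>M) = 1"
proof (rule tail1)
  show "sigma_finite_measure M" by unfold_locales
  show "AE \<omega> in M. 0 < inverse (fst (\<xi> \<omega>))" using AE_pos by eventually_elim auto
  fix u :: real assume u: "u > 0"
  have "emeasure M {\<omega>\<in>space M. u \<le> inverse (fst (\<xi> \<omega>))} = emeasure M {\<omega>\<in>space M. fst (\<xi> \<omega>) \<le> 1 / u}"
  proof (rule emeasure_eq_AE)
    show "AE \<omega> in M. (\<omega> \<in> {\<omega>\<in>space M. u \<le> inverse (fst (\<xi> \<omega>))}) = (\<omega> \<in> {\<omega>\<in>space M. fst (\<xi> \<omega>) \<le> 1 / u})"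
      using AE_pos
    proof eventually_elim
      fix \<omega> assume pos: "0 < fst (\<xi> \<omega>) \<and> 0 < snd (\<xi> \<omega>)"
      then have "u \<le> inverse (fst (\<xi> \<omega>)) \<longleftrightarrow> fst (\<xi> \<omega>) \<le> 1 / u" using u by (simp add: field_simps)
      then show "(\<omega> \<in> {\<omega>\<in>space M. u \<le> inverse (fst (\<xi> \<omega>))}) = (\<omega> \<in> {\<omega>\<in>space M. fst (\<xi> \<omega>) \<le> 1 / u})"
        by auto
    qed
  qed measurable
  also have "\<dots> = ennreal (exp (- u))" using marg1[of "1/u"] u by (simp add: emeasure_eq_measure)
  finally show "emeasure M {\<omega>\<in>space M. u \<le> inverse (fst (\<xi> \<omega>))} = ennreal (exp (- u))" .
qed measurable

lemma mean2: "(\<integral>\<^sup>+\<omega>. ennreal (inverse (snd (\<xi> \<omega>))) \<partial>M) = 1"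
proof (rule tail1)
  show "sigma_finite_measure M" by unfold_locales
  show "AE \<omega> in M. 0 < inverse (snd (\<xi> \<omega>))" using AE_pos by eventually_elim auto
  fix u :: real assume u: "u > 0"
  have "emeasure M {\<omega>\<in>space M. u \<le> inverse (snd (\<xi> \<omega>))} = emeasure M {\<omega>\<in>space M. snd (\<xi> \<omega>) \<le> 1 / u}"
  proof (rule emeasure_eq_AE)
    show "AE \<omega> in M. (\<omega> \<in> {\<omega>\<in>space M. u \<le> inverse (snd (\<xi> \<omega>))}) = (\<omega> \<in> {\<omega>\<in>space M. snd (\<xi> \<omega>) \<le> 1 / u})"
      using AE_pos
    proof eventually_elim
      fix \<omega> assume pos: "0 < fst (\<xi> \<omega>) \<and> 0 < snd (\<xi> \<omega>)"
      then have "u \<le> inverse (snd (\<xi> \<omega>)) \<longleftrightarrow> snd (\<xi> \<omega>) \<le> 1 / u" using u by (simp add: field_simps)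
      then show "(\<omega> \<in> {\<omega>\<in>space M. u \<le> inverse (snd (\<xi> \<omega>))}) = (\<omega> \<in> {\<omega>\<in>space M. snd (\<xi> \<omega>) \<le> 1 / u})"
        by auto
    qed
  qed measurable
  also have "\<dots> = ennreal (exp (- u))" using marg2[of "1/u"] u by (simp add: emeasure_eq_measure)
  finally show "emeasure M {\<omega>\<in>space M. u \<le> inverse (snd (\<xi> \<omega>))} = ennreal (exp (- u))" .
qed measurable

end



context sms begin

definition "P' = {u::real\<times>real. u \<in> Q \<and> supp_fun K u \<le> 1}"

lemma Q_open: "open Q"
  unfolding Q_def by (intro open_Collect_conj open_Collect_less continuous_intros)

lemma Q_sets[measurable]: "Q \<in> sets borel"
  using Q_open by simp

lemma h_pos: "u \<in> Q \<Longrightarrow> 0 < supp_fun K u"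
proof -
  assume u: "u \<in> Q"
  obtain a where a: "a \<in> K" "fst a > 0" using exists_a by blast
  have "fst a * fst u \<le> supp_fun K u"
    using supp_lower1[OF K_props(1) a(1) K_props(2)] u by (auto simp: Q_def)
  moreover have "0 < fst a * fst u" using a u by (auto simp: Q_def)
  ultimately show ?thesis by linarith
qed

lemma scale_set:
  assumes t: "t > 0"
  shows "emeasure lborel {u. u \<in> Q \<and> supp_fun K u \<le> t} = ennreal (t^2) * emeasure lborel P'"
proof -
  let ?T = "\<lambda>x::real\<times>real. 0 + t *\<^sub>R x"
  have eq: "lborel = density (distr lborel borel ?T) (\<lambda>_. \<bar>t\<bar>^DIM(real\<times>real))"
    using lborel_affine[of t "0::real\<times>real"] t by (simp add: power2_eq_square)
  have S: "{u. u \<in> Q \<and> supp_fun K u \<le> t} \<in> sets borel" by measurable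
  have "emeasure lborel {u. u \<in> Q \<and> supp_fun K u \<le> t}
      = emeasure (density (distr lborel borel ?T) (\<lambda>_. \<bar>t\<bar>^DIM(real\<times>real))) {u. u \<in> Q \<and> supp_fun K u \<le> t}"
    by (simp only: eq[symmetric])
  also have "\<dots> = (\<integral>\<^sup>+x. ennreal (\<bar>t\<bar>^DIM(real\<times>real)) * indicator {u. u \<in> Q \<and> supp_fun K u \<le> t} x \<partial>distr lborel borel ?T)"
    using S by (subst emeasure_density) auto
  also have "\<dots> = ennreal (\<bar>t\<bar>^DIM(real\<times>real)) * emeasure (distr lborel borel ?T) {u. u \<in> Q \<and> supp_fun K u \<le> t}"
    using S by (subst nn_integral_cmult) auto
  also have "emeasure (distr lborel borel ?T) {u. u \<in> Q \<and> supp_fun K u \<le> t}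
      = emeasure lborel (?T -` {u. u \<in> Q \<and> supp_fun K u \<le> t} \<inter> space lborel)"
    using S by (subst emeasure_distr) auto
  also have "?T -` {u. u \<in> Q \<and> supp_fun K u \<le> t} \<inter> space lborel = P'"
  proof -
    have "t *\<^sub>R x \<in> Q \<longleftrightarrow> x \<in> Q" for x :: "real \<times> real"
      using t by (auto simp: Q_def zero_less_mult_iff)
    moreover have "supp_fun K (t *\<^sub>R x) \<le> t \<longleftrightarrow> supp_fun K x \<le> 1" for x
      using supp_homog[OF K_props(1) K_ne t, of x] t by simp
    ultimately show ?thesis by (auto simp: P'_def)
  qed
  finally show ?thesis using t by (simp add: power2_eq_square)
qed

lemma layer: "(\<integral>\<^sup>+u. ennreal (exp (- supp_fun K u)) * indicator Q u \<partial>lborel) = 2 * emeasure lborel P'"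
proof -
  interpret q: pair_sigma_finite "lborel :: (real \<times> real) measure" "lborel :: real measure" ..
  define F where "F = (\<lambda>(u::real\<times>real) (t::real). if 0 < fst u \<and> 0 < snd u \<and> supp_fun K u \<le> t then ennreal (exp (- t)) else 0)"
  have Fm: "case_prod F \<in> borel_measurable (lborel \<Otimes>\<^sub>M lborel)"
    unfolding F_def by measurable
  have "(\<integral>\<^sup>+u. ennreal (exp (- supp_fun K u)) * indicator Q u \<partial>lborel) = (\<integral>\<^sup>+u. (\<integral>\<^sup>+t. F u t \<partial>lborel) \<partial>lborel)"
  proof (intro nn_integral_cong)
    fix u :: "real \<times> real"
    show "ennreal (exp (- supp_fun K u)) * indicator Q u = (\<integral>\<^sup>+t. F u t \<partial>lborel)"
    proof (cases "u \<in> Q")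
      case True
      then have "(\<integral>\<^sup>+t. F u t \<partial>lborel) = (\<integral>\<^sup>+t. ennreal (exp (- t)) * indicator {supp_fun K u..} t \<partial>lborel)"
        by (intro nn_integral_cong) (auto simp: F_def Q_def indicator_def)
      then show ?thesis using True E1 by simp
    next
      case False
      then have "F u t = 0" for t by (auto simp: F_def Q_def)
      then show ?thesis using False by simp
    qed
  qed
  also have "\<dots> = (\<integral>\<^sup>+t. (\<integral>\<^sup>+u. F u t \<partial>lborel) \<partial>lborel)"
    using lborel_pair.Fubini'[OF Fm] by simp
  also have "\<dots> = (\<integral>\<^sup>+t. ennreal (t^2 * exp (- t)) * indicator {0..} t * emeasure lborel P' \<partial>lborel)"
  proof (rule nn_integral_cong)
    fix t :: real
    have "(\<integral>\<^sup>+u. F u t \<partial>lborel) = (\<integral>\<^sup>+u. ennreal (exp (- t)) * indicator {u. u \<in> Q \<and> supp_fun K u \<le> t} u \<partial>lborel)"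
      unfolding F_def by (intro nn_integral_cong) (auto simp: indicator_def Q_def)
    also have "\<dots> = ennreal (exp (- t)) * emeasure lborel {u. u \<in> Q \<and> supp_fun K u \<le> t}"
      by (subst nn_integral_cmult) (auto intro!: nn_integral_indicator)
    also have "\<dots> = ennreal (t^2 * exp (- t)) * indicator {0..} t * emeasure lborel P'"
    proof (cases "t > 0")
      case True
      then show ?thesis by (simp add: scale_set ennreal_mult' mult_ac)
    next
      case False
      then have e: "{u. u \<in> Q \<and> supp_fun K u \<le> t} = {}" using h_pos by force
      have z: "ennreal (t^2 * exp (- t)) * indicator {0..} t = 0" using False
        by (cases "t = 0") (auto simp: indicator_def)
      show ?thesis by (simp only: e z emeasure_empty mult_zero_right mult_zero_left)
    qed
    finally show "(\<integral>\<^sup>+u. F u t \<partial>lborel) = ennreal (t^2 * exp (- t)) * indicator {0..} t * emeasure lborel P'" .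
  qed
  also have "\<dots> = (\<integral>\<^sup>+t. ennreal (t^2 * exp (- t)) * indicator {0..} t \<partial>lborel) * emeasure lborel P'"
    by (rule nn_integral_multc) auto
  also have "\<dots> = 2 * emeasure lborel P'"
    by (simp only: nn_intergal_power_times_exp_Ici) simp
  finally show ?thesis .
qed

end



context sms begin

lemma P'_sets[measurable]: "P' \<in> sets borel"
  unfolding P'_def Q_def by measurable

lemma polar_sets[measurable]: "polar_pos K \<in> sets borel"
  unfolding polar_pos_def by measurable

lemma axis1_null: "{u::real\<times>real. fst u = 0} \<in> null_sets lborel"
proof -
  have eq: "{u::real\<times>real. fst u = 0} = {0} \<times> UNIV" by auto
  have "emeasure (lborel \<Otimes>\<^sub>M lborel) ({0::real} \<times> (UNIV::real set)) = emeasure lborel {0::real} * emeasure lborel (UNIV::real set)"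
    by (rule lborel.emeasure_pair_measure_Times) auto
  then have "emeasure (lborel :: (real\<times>real) measure) ({0::real} \<times> (UNIV::real set)) = 0"
    by (simp add: lborel_prod)
  then have "emeasure lborel {u::real\<times>real. fst u = 0} = 0" unfolding eq .
  moreover have "{u::real\<times>real. fst u = 0} \<in> sets lborel" by simp
  ultimately show ?thesis by (simp add: null_sets_def)
qed

lemma axis2_null: "{u::real\<times>real. snd u = 0} \<in> null_sets lborel"
proof -
  have eq: "{u::real\<times>real. snd u = 0} = UNIV \<times> {0}" by auto
  have "emeasure (lborel \<Otimes>\<^sub>M lborel) ((UNIV::real set) \<times> {0::real}) = emeasure lborel (UNIV::real set) * emeasure lborel {0::real}"
    by (rule lborel.emeasure_pair_measure_Times) auto
  then have "emeasure (lborel :: (real\<times>real) measure) ((UNIV::real set) \<times> {0::real}) = 0"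
    by (simp add: lborel_prod)
  then have "emeasure lborel {u::real\<times>real. snd u = 0} = 0" unfolding eq .
  moreover have "{u::real\<times>real. snd u = 0} \<in> sets lborel" by simp
  ultimately show ?thesis by (simp add: null_sets_def)
qed

lemma polar_eq: "emeasure lborel (polar_pos K) = emeasure lborel P'"
proof -
  have sub: "polar_pos K - P' \<subseteq> {u::real\<times>real. fst u = 0} \<union> {u. snd u = 0}"
    by (auto simp: polar_pos_def P'_def Q_def)
  have "polar_pos K - P' \<in> null_sets lborel"
    by (rule null_sets_subset[OF null_sets.Un[OF axis1_null axis2_null] _ sub]) simp
  moreover have "polar_pos K = P' \<union> (polar_pos K - P')"
    by (auto simp: polar_pos_def P'_def Q_def)
  ultimately show ?thesis
    by (metis P'_sets emeasure_Un_null_set sets_lborel)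
qed

lemma P'_finite: "emeasure lborel P' < \<infinity>"
proof -
  obtain a where a: "a \<in> K" "fst a > 0" using exists_a by blast
  obtain b where b: "b \<in> K" "snd b > 0" using exists_b by blast
  have "P' \<subseteq> cbox (0, 0) (1 / fst a, 1 / snd b)"
  proof
    fix u assume u: "u \<in> P'"
    then have u0: "0 < fst u" "0 < snd u" "supp_fun K u \<le> 1" by (auto simp: P'_def Q_def)
    have "fst a * fst u \<le> 1"
      using order_trans[OF supp_lower1[OF K_props(1) a(1) K_props(2), of u] u0(3)] u0 by simp
    then have 1: "fst u \<le> 1 / fst a" using a by (simp add: field_simps)
    have "snd b * snd u \<le> 1"
      using order_trans[OF supp_lower2[OF K_props(1) b(1) K_props(2), of u] u0(3)] u0 by simp
    then have 2: "snd u \<le> 1 / snd b" using b by (simp add: field_simps)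
    show "u \<in> cbox (0, 0) (1 / fst a, 1 / snd b)"
      using 1 2 u0 by (cases u) (auto simp: cbox_Pair_eq)
  qed
  then have "emeasure lborel P' \<le> emeasure lborel (cbox (0::real, 0::real) (1 / fst a, 1 / snd b))"
    by (intro emeasure_mono) auto
  also have "\<dots> < \<infinity>" by (rule emeasure_lborel_cbox_finite)
  finally show ?thesis .
qed

end

theorem proposition5p3:
  fixes M :: "'a measure" and \<xi> :: "'a \<Rightarrow> real \<times> real" and K :: "(real \<times> real) set"
  assumes "simple_max_stable_dep M \<xi> K"
  shows "integrable M (\<lambda>\<omega>. inverse (fst (\<xi> \<omega>)) * inverse (snd (\<xi> \<omega>))) \<and>
         integral\<^sup>L M (\<lambda>\<omega>. inverse (fst (\<xi> \<omega>)) * inverse (snd (\<xi> \<omega>)))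
           = 2 * measure lborel (polar_pos K) \<and>
         covariance M (\<lambda>\<omega>. inverse (fst (\<xi> \<omega>))) (\<lambda>\<omega>. inverse (snd (\<xi> \<omega>)))
           = 2 * measure lborel (polar_pos K) - 1"
proof -
  interpret sms M \<xi> K by unfold_locales (rule assms)
  define e1 where "e1 = (\<lambda>\<omega>. inverse (fst (\<xi> \<omega>)))"
  define e2 where "e2 = (\<lambda>\<omega>. inverse (snd (\<xi> \<omega>)))"
  have [measurable]: "e1 \<in> borel_measurable M" "e2 \<in> borel_measurable M"
    unfolding e1_def e2_def by measurable
  have pos1: "AE \<omega> in M. 0 \<le> e1 \<omega>" and pos2: "AE \<omega> in M. 0 \<le> e2 \<omega>"
    and pos12: "AE \<omega> in M. 0 \<le> e1 \<omega> * e2 \<omega>"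
    using AE_pos by (eventually_elim, simp add: e1_def e2_def)+
  have fin: "emeasure lborel (polar_pos K) = ennreal (measure lborel (polar_pos K))"
    using P'_finite polar_eq by (intro emeasure_eq_ennreal_measure) simp
  have nn12: "(\<integral>\<^sup>+\<omega>. ennreal (e1 \<omega> * e2 \<omega>) \<partial>M) = ennreal (2 * measure lborel (polar_pos K))"
    using tail2 layer polar_eq fin by (simp add: e1_def e2_def ennreal_mult')
  have int12: "integrable M (\<lambda>\<omega>. e1 \<omega> * e2 \<omega>)"
    by (rule integrableI_nonneg) (use pos12 nn12 in auto)
  have I12: "integral\<^sup>L M (\<lambda>\<omega>. e1 \<omega> * e2 \<omega>) = 2 * measure lborel (polar_pos K)"
    using integral_eq_nn_integral[of "\<lambda>\<omega>. e1 \<omega> * e2 \<omega>" M] pos12 nn12 by simp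
  have int1: "integrable M e1"
    by (rule integrableI_nonneg) (use pos1 mean1 in \<open>auto simp: e1_def\<close>)
  have I1: "integral\<^sup>L M e1 = 1"
    using integral_eq_nn_integral[of e1 M] pos1 mean1 by (simp add: e1_def)
  have int2: "integrable M e2"
    by (rule integrableI_nonneg) (use pos2 mean2 in \<open>auto simp: e2_def\<close>)
  have I2: "integral\<^sup>L M e2 = 1"
    using integral_eq_nn_integral[of e2 M] pos2 mean2 by (simp add: e2_def)
  have "covariance M e1 e2 = integral\<^sup>L M (\<lambda>\<omega>. (e1 \<omega> * e2 \<omega> - e1 \<omega>) - (e2 \<omega> - 1))"
    unfolding covariance_def I1 I2 by (rule arg_cong[where f="integral\<^sup>L M"]) (auto simp: algebra_simps)
  also have "\<dots> = (integral\<^sup>L M (\<lambda>\<omega>. e1 \<omega> * e2 \<omega>) - integral\<^sup>L M e1) - (integral\<^sup>L M e2 - integral\<^sup>L M (\<lambda>_. 1))"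
    using int1 int2 int12 by (simp add: integral_diff)
  also have "\<dots> = 2 * measure lborel (polar_pos K) - 1"
    using I1 I2 I12 prob_space by simp
  finally have "covariance M e1 e2 = 2 * measure lborel (polar_pos K) - 1" .
  then show ?thesis using int12 I12 unfolding e1_def e2_def by simp
qed


end
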